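(* Let $(X_1,Y_1),\dots,(X_{n+m},Y_{n+m})$ be exchangeable with $Y_i\in\mathbb{R}$, $s:\mathcal{X}\to[0,1]$ a fixed score, $c\in\mathbb{R}$, and binary risk $L_i=\mathbf{1}\{Y_i\le c\}$. For $\gamma>0$ let $E'_{\gamma,n+j}=E_{\gamma,n+j}(1)$, $j=1,\dots,m$, and let $\mathcal{S}'$ be the output of the e-BH procedure at level $\alpha\in(0,1)$ applied to $\{E'_{\gamma,n+j}\}_{j=1}^m$. Then (i) $\mathcal{S}'$ satisfies $\mathbb{E}\big[\sum_{j\in\mathcal{S}'}L_{n+j}/(1\vee|\mathcal{S}'|)\big]\le\alpha$; (ii) if $\gamma=\alpha$, then $\mathcal{S}'=\mathcal{S}^{\mathrm{CS}}$.
   Context: Let $\mathcal{M}=\{s(X_i)\}_{i=1}^{n+m}$; $\mathrm{FR}_{n+j}(t;\ell)=\frac{\ell\mathbf{1}\{s(X_{n+j})\le t\}+\sum_{i=1}^nL_i\mathbf{1}\{s(X_i)\le t\}}{1+\sum_{k\ne j}\mathbf{1}\{s(X_{n+k})\le t\}}\cdot\frac{m}{n+1}$; $t_{\gamma,n+j}(\ell)=\max\{t\in\mathcal{M}:\mathrm{FR}_{n+j}(t;\ell)\le\gamma\}$ ($\max\emptyset=-\infty$); $E_{\gamma,n+j}(\ell)=\frac{(n+1)\mathbf{1}\{s(X_{n+j})\le t_{\gamma,n+j}(\ell)\}}{\ell\mathbf{1}\{s(X_{n+j})\le t_{\gamma,n+j}(\ell)\}+\sum_{i=1}^nL_i\mathbf{1}\{s(X_i)\le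 t_{\gamma,n+j}(\ell)\}}$ (ratio $0$ if numerator $0$, $+\infty$ if numerator positive and denominator $0$). The e-BH procedure at level $\alpha$ on $E_1,\dots,E_m$: $\hat\tau=\max\{\tau\in\{1,\dots,m\}:\sum_j\mathbf{1}\{E_j\ge m/(\alpha\tau)\}\ge\tau\}$ ($0$ if empty), selecting $\{j:E_j\ge m/(\alpha\hat\tau)\}$ (empty if $\hat\tau=0$). $\mathcal{S}^{\mathrm{CS}}$ is the Benjamini–Hochberg output at level $\alpha$ on the conformal p-values $p_j=\frac{1+\sum_{i=1}^n\mathbf{1}\{V(X_i,Y_i)\le V(X_{n+j},c)\}}{n+1}$, $V(x,y)=\infty\cdot\mathbf{1}\{y>c\}+s(x)$ (with $\infty\cdot0=0$). *)

theory Defs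
  imports "HOL-Probability.Probability"
begin

text \<open>Indices: calibration points are 1..n, test points are n+1..n+m.
  sc i = s(X_i) (scores), L i = risks.\<close>

definition FR :: "nat \<Rightarrow> nat \<Rightarrow> (nat \<Rightarrow> real) \<Rightarrow> (nat \<Rightarrow> real) \<Rightarrow> nat \<Rightarrow> real \<Rightarrow> real \<Rightarrow> real" where
  "FR n m sc L j t l =
     (l * of_bool (sc (n + j) \<le> t) + (\<Sum>i=1..n. L i * of_bool (sc i \<le> t)))
     / (1 + real (card {k \<in> {1..m}. k \<noteq> j \<and> sc (n + k) \<le> t}))
     * (real m / real (n + 1))"

definition tgam :: "nat \<Rightarrow> nat \<Rightarrow> (nat \<Rightarrow> real) \<Rightarrow> (nat \<Rightarrow> real) \<Rightarrow> real \<Rightarrow> nat \<Rightarrow> real \<Rightarrow> ereal" where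
  "tgam n m sc L \<gamma> j l =
     (let A = {t \<in> sc ` {1..n+m}. FR n m sc L j t l \<le> \<gamma>}
      in if A = {} then -\<infinity> else ereal (Max A))"

definition Eval :: "nat \<Rightarrow> nat \<Rightarrow> (nat \<Rightarrow> real) \<Rightarrow> (nat \<Rightarrow> real) \<Rightarrow> real \<Rightarrow> nat \<Rightarrow> real \<Rightarrow> ereal" where
  "Eval n m sc L \<gamma> j l =
     (let T = tgam n m sc L \<gamma> j l;
          num = real (n + 1) * of_bool (ereal (sc (n + j)) \<le> T);
          den = l * of_bool (ereal (sc (n + j)) \<le> T)
                + (\<Sum>i=1..n. L i * of_bool (ereal (sc i) \<le> T))
      in if num = 0 then 0 else if den = 0 then \<infinity> else ereal (num / den))"

definition eBH_tau :: "real \<Rightarrow> nat \<Rightarrow> (nat \<Rightarrow> ereal) \<Rightarrow> nat" where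
  "eBH_tau \<alpha> m E =
     (let A = {\<tau> \<in> {1..m}. card {j \<in> {1..m}. E j \<ge> ereal (real m / (\<alpha> * real \<tau>))} \<ge> \<tau>}
      in if A = {} then 0 else Max A)"

definition eBH :: "real \<Rightarrow> nat \<Rightarrow> (nat \<Rightarrow> ereal) \<Rightarrow> nat set" where
  "eBH \<alpha> m E =
     (let \<tau> = eBH_tau \<alpha> m E
      in if \<tau> = 0 then {} else {j \<in> {1..m}. E j \<ge> ereal (real m / (\<alpha> * real \<tau>))})"

definition BH_k :: "real \<Rightarrow> nat \<Rightarrow> (nat \<Rightarrow> real) \<Rightarrow> nat" where
  "BH_k \<alpha> m p =
     (let A = {k \<in> {1..m}. card {j \<in> {1..m}. p j \<le> \<alpha> * real k / real m} \<ge> k}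
      in if A = {} then 0 else Max A)"

definition BH :: "real \<Rightarrow> nat \<Rightarrow> (nat \<Rightarrow> real) \<Rightarrow> nat set" where
  "BH \<alpha> m p =
     (let k = BH_k \<alpha> m p
      in if k = 0 then {} else {j \<in> {1..m}. p j \<le> \<alpha> * real k / real m})"

text \<open>Nonconformity score V(x,y) = infinity * 1{y > c} + s(x), with infinity*0 = 0.\<close>
definition Vscore :: "('x \<Rightarrow> real) \<Rightarrow> real \<Rightarrow> 'x \<Rightarrow> real \<Rightarrow> ereal" where
  "Vscore s c x y = (if y > c then \<infinity> else ereal (s x))"

definition conf_pval :: "nat \<Rightarrow> ('x \<Rightarrow> real) \<Rightarrow> real \<Rightarrow> (nat \<Rightarrow> 'x) \<Rightarrow> (nat \<Rightarrow> real) \<Rightarrow> nat \<Rightarrow> real" where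
  "conf_pval n s c X Y j =
     (1 + real (card {i \<in> {1..n}. Vscore s c (X i) (Y i) \<le> Vscore s c (X (n + j)) c})) / real (n + 1)"

end

theory Submission
  imports Defs
begin


definition Nc :: "nat \<Rightarrow> (nat \<Rightarrow> real) \<Rightarrow> (nat \<Rightarrow> real) \<Rightarrow> real \<Rightarrow> real" where
  "Nc n sc Lv t = (\<Sum>i=1..n. Lv i * of_bool (sc i \<le> t))"

definition Rc :: "nat \<Rightarrow> nat \<Rightarrow> (nat \<Rightarrow> real) \<Rightarrow> real \<Rightarrow> nat" where
  "Rc n m sc t = card {k \<in> {1..m}. sc (n + k) \<le> t}"

lemma card_minus_j:
  assumes "j \<in> {1..m}" "sc (n + j) \<le> t"
  shows "1 + real (card {k \<in> {1..m}. k \<noteq> j \<and> sc (n + k) \<le> t}) = real (Rc n m sc t)"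
proof -
  have "{k \<in> {1..m}. sc (n + k) \<le> t} = insert j {k \<in> {1..m}. k \<noteq> j \<and> sc (n + k) \<le> t}"
    using assms by auto
  then have "card {k \<in> {1..m}. sc (n + k) \<le> t} = Suc (card {k \<in> {1..m}. k \<noteq> j \<and> sc (n + k) \<le> t})"
    by simp
  then show ?thesis unfolding Rc_def by simp
qed

lemma FR_ge:
  assumes "j \<in> {1..m}" "sc (n + j) \<le> t"
  shows "FR n m sc Lv j t 1 = (1 + Nc n sc Lv t) / real (Rc n m sc t) * (real m / real (n + 1))"
  unfolding FR_def Nc_def using card_minus_j[where sc=sc and n=n and t=t, OF assms] assms(2) by simp

lemma Rc_pos:
  assumes "j \<in> {1..m}" "sc (n + j) \<le> t"
  shows "Rc n m sc t \<ge> 1"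
proof -
  have "j \<in> {k \<in> {1..m}. sc (n + k) \<le> t}" using assms by auto
  then have "card {k \<in> {1..m}. sc (n + k) \<le> t} \<noteq> 0" by (subst card_0_eq) auto
  then show ?thesis unfolding Rc_def by linarith
qed

lemma Nc_nonneg: "(\<forall>i. Lv i \<ge> 0) \<Longrightarrow> Nc n sc Lv t \<ge> 0"
  unfolding Nc_def by (intro sum_nonneg) auto

lemma Nc_mono: "(\<forall>i. Lv i \<ge> 0) \<Longrightarrow> t \<le> t' \<Longrightarrow> Nc n sc Lv t \<le> Nc n sc Lv t'"
  unfolding Nc_def by (intro sum_mono) (auto intro: mult_left_mono)

definition Sset :: "nat \<Rightarrow> nat \<Rightarrow> (nat \<Rightarrow> real) \<Rightarrow> (nat \<Rightarrow> real) \<Rightarrow> real \<Rightarrow> real set" where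
  "Sset n m sc Lv \<gamma> = {t \<in> sc ` {1..n+m}. Rc n m sc t \<ge> 1 \<and>
      (1 + Nc n sc Lv t) / real (Rc n m sc t) * (real m / real (n + 1)) \<le> \<gamma>}"

lemma Sset_finite: "finite (Sset n m sc Lv \<gamma>)"
  unfolding Sset_def by auto

lemma Eval_form:
  assumes j: "j \<in> {1..m}" and Lnn: "\<forall>i. Lv i \<ge> 0"
  shows "Eval n m sc Lv \<gamma> j 1 =
    (if Sset n m sc Lv \<gamma> \<noteq> {} \<and> sc (n + j) \<le> Max (Sset n m sc Lv \<gamma>)
     then ereal (real (n + 1) / (1 + Nc n sc Lv (Max (Sset n m sc Lv \<gamma>)))) else 0)"
proof -
  define A where "A = {t \<in> sc ` {1..n+m}. FR n m sc Lv j t 1 \<le> \<gamma>}"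
  define S where "S = Sset n m sc Lv \<gamma>"
  have fA: "finite A" unfolding A_def by auto
  have fS: "finite S" unfolding S_def by (rule Sset_finite)
  have imp: "A \<noteq> {} \<and> sc (n + j) \<le> Max A \<Longrightarrow> S \<noteq> {} \<and> sc (n + j) \<le> Max S \<and> Max A = Max S"
  proof -
    assume h: "A \<noteq> {} \<and> sc (n + j) \<le> Max A"
    define T where "T = Max A"
    have TA: "T \<in> A" using h fA unfolding T_def by auto
    have Tge: "sc (n + j) \<le> T" using h T_def by auto
    have "T \<in> S" using TA Tge FR_ge[where sc=sc and n=n and Lv=Lv, OF j Tge] Rc_pos[where sc=sc and n=n, OF j Tge]
      unfolding A_def S_def Sset_def by auto
    then have SN: "S \<noteq> {}" and TS: "T \<le> Max S" using fS by auto
    define T' where "T' = Max S"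
    have T'S: "T' \<in> S" using SN fS unfolding T'_def by auto
    have T'ge: "sc (n + j) \<le> T'" using Tge TS T'_def by auto
    have "T' \<in> A" using T'S FR_ge[where sc=sc and n=n and Lv=Lv, OF j T'ge] unfolding A_def S_def Sset_def by auto
    then have "T' \<le> T" using fA unfolding T_def by auto
    then show ?thesis using SN TS T'ge T_def T'_def by auto
  qed
  have equiv: "(A \<noteq> {} \<and> sc (n + j) \<le> Max A) \<longleftrightarrow> (S \<noteq> {} \<and> sc (n + j) \<le> Max S)"
  proof
    assume "S \<noteq> {} \<and> sc (n + j) \<le> Max S"
    then have SN: "S \<noteq> {}" and ge: "sc (n + j) \<le> Max S" by auto
    have MS: "Max S \<in> S" using SN fS by auto
    have "Max S \<in> A" using MS FR_ge[where sc=sc and n=n and Lv=Lv, OF j ge] unfolding A_def S_def Sset_def by auto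
    then show "A \<noteq> {} \<and> sc (n + j) \<le> Max A" using fA ge
      by (meson Max_ge empty_iff order_trans)
  qed (use imp in auto)
  have tg: "tgam n m sc Lv \<gamma> j 1 = (if A = {} then -\<infinity> else ereal (Max A))"
    unfolding tgam_def A_def Let_def by simp
  have Npos: "1 + Nc n sc Lv t > 0" for t using Nc_nonneg[OF Lnn, of n sc t] by simp
  show ?thesis
  proof (cases "A \<noteq> {} \<and> sc (n + j) \<le> Max A")
    case True
    then have "S \<noteq> {} \<and> sc (n + j) \<le> Max S" "Max A = Max S" using imp by auto
    moreover have "1 * of_bool True + (\<Sum>i = 1..n. Lv i * of_bool (ereal (sc i) \<le> ereal (Max A)))
        = 1 + Nc n sc Lv (Max A)" unfolding Nc_def by simp
    ultimately show ?thesis using True Npos[of "Max S"] unfolding Eval_def tg Let_def S_def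
      by (simp del: sum_mult_of_bool_eq)
  next
    case False
    then have "\<not> (S \<noteq> {} \<and> sc (n + j) \<le> Max S)" using equiv by auto
    moreover have "\<not> (ereal (sc (n + j)) \<le> tgam n m sc Lv \<gamma> j 1)" using False unfolding tg by auto
    ultimately show ?thesis unfolding Eval_def Let_def S_def by auto
  qed
qed

lemma eBH_form:
  assumes Lnn: "\<forall>i. Lv i \<ge> 0" and al: "\<alpha> > 0"
  shows "eBH \<alpha> m (\<lambda>j. Eval n m sc Lv \<alpha> j 1) =
    (if Sset n m sc Lv \<alpha> = {} then {} else {j \<in> {1..m}. sc (n + j) \<le> Max (Sset n m sc Lv \<alpha>)})"
proof -
  define S where "S = Sset n m sc Lv \<alpha>"
  define E where "E = (\<lambda>j. Eval n m sc Lv \<alpha> j 1)"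
  have fS: "finite S" unfolding S_def by (rule Sset_finite)
  have thr: "ereal (real m / (\<alpha> * real \<tau>)) > 0" if "\<tau> \<in> {1..m}" for \<tau>
    using that al by auto
  show ?thesis
  proof (cases "S = {}")
    case True
    have E0: "E j = 0" if "j \<in> {1..m}" for j
      using Eval_form[OF that Lnn, of n sc \<alpha>] True unfolding E_def S_def by simp
    have "{\<tau> \<in> {1..m}. card {j \<in> {1..m}. E j \<ge> ereal (real m / (\<alpha> * real \<tau>))} \<ge> \<tau>} = {}"
    proof -
      have "{j \<in> {1..m}. E j \<ge> ereal (real m / (\<alpha> * real \<tau>))} = {}" if "\<tau> \<in> {1..m}" for \<tau>
      proof -
        have False if "x \<in> {1..m}" "E x \<ge> ereal (real m / (\<alpha> * real \<tau>))" for x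
          using thr[OF \<open>\<tau> \<in> {1..m}\<close>] E0[OF that(1)] that(2) by simp
        then show ?thesis by auto
      qed
      note emp = this
      show ?thesis
      proof (rule equals0I)
        fix \<tau> assume h: "\<tau> \<in> {\<tau> \<in> {1..m}. card {j \<in> {1..m}. E j \<ge> ereal (real m / (\<alpha> * real \<tau>))} \<ge> \<tau>}"
        then have t1: "\<tau> \<in> {1..m}" by blast
        from h have "card {j \<in> {1..m}. E j \<ge> ereal (real m / (\<alpha> * real \<tau>))} \<ge> \<tau>" by blast
        then show False unfolding emp[OF t1] using t1 by simp
      qed
    qed
    then have "eBH_tau \<alpha> m E = 0" unfolding eBH_tau_def Let_def by simp
    then show ?thesis using True unfolding eBH_def Let_def E_def S_def by simp
  next
    case False
    define T where "T = Max S"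
    define Q where "Q = {j \<in> {1..m}. sc (n + j) \<le> T}"
    define e where "e = real (n + 1) / (1 + Nc n sc Lv T)"
    have TS: "T \<in> S" using False fS unfolding T_def by auto
    have Npos: "1 + Nc n sc Lv T > 0" using Nc_nonneg[OF Lnn, of n sc T] by simp
    have cQ: "card Q = Rc n m sc T" unfolding Q_def Rc_def by simp
    have R1: "Rc n m sc T \<ge> 1" and F: "(1 + Nc n sc Lv T) / real (Rc n m sc T) * (real m / real (n + 1)) \<le> \<alpha>"
      using TS unfolding S_def Sset_def by auto
    have ebound: "real m / (\<alpha> * real (card Q)) \<le> e"
    proof -
      have Rp: "real (Rc n m sc T) > 0" using R1 by simp
      have eq1: "(1 + Nc n sc Lv T) / real (Rc n m sc T) * (real m / real (n + 1))
          = ((1 + Nc n sc Lv T) * real m) / (real (Rc n m sc T) * real (n + 1))" by simp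
      have dp: "real (Rc n m sc T) * real (n + 1) > 0" using Rp by simp
      from F have "(1 + Nc n sc Lv T) * real m \<le> \<alpha> * (real (Rc n m sc T) * real (n + 1))"
        unfolding eq1 using pos_divide_le_eq[OF dp] by (simp add: mult.commute)
      then have "(1 + Nc n sc Lv T) * real m \<le> \<alpha> * real (Rc n m sc T) * real (n + 1)"
        by (simp add: mult.assoc)
      then show ?thesis unfolding e_def cQ using Rp Npos al
        by (simp add: field_simps)
    qed
    have EQ: "E j = (if j \<in> Q then ereal e else 0)" if "j \<in> {1..m}" for j
      using Eval_form[OF that Lnn, of n sc \<alpha>] False that
      unfolding E_def S_def[symmetric] T_def[symmetric] Q_def e_def by auto
    have sub: "{j \<in> {1..m}. E j \<ge> ereal (real m / (\<alpha> * real \<tau>))} \<subseteq> Q" if "\<tau> \<in> {1..m}" for \<tau>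
    proof
      fix x assume x: "x \<in> {j \<in> {1..m}. E j \<ge> ereal (real m / (\<alpha> * real \<tau>))}"
      show "x \<in> Q"
      proof (rule ccontr)
        assume "x \<notin> Q"
        then have "E x = 0" using EQ x by auto
        then show False using x thr[OF that] by simp
      qed
    qed
    have Qm: "Q \<subseteq> {1..m}" unfolding Q_def by auto
    have cQm: "card Q \<in> {1..m}" using R1 cQ card_mono[OF _ Qm] by auto
    have eqQ: "{j \<in> {1..m}. E j \<ge> ereal (real m / (\<alpha> * real (card Q)))} = Q"
      using sub[OF cQm] EQ ebound Qm by force
    define A where "A = {\<tau> \<in> {1..m}. card {j \<in> {1..m}. E j \<ge> ereal (real m / (\<alpha> * real \<tau>))} \<ge> \<tau>}"
    have inA: "card Q \<in> A" unfolding A_def using eqQ cQm by simp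
    have leA: "\<tau> \<le> card Q" if "\<tau> \<in> A" for \<tau>
    proof -
      have "\<tau> \<in> {1..m}" using that unfolding A_def by auto
      then have "card {j \<in> {1..m}. E j \<ge> ereal (real m / (\<alpha> * real \<tau>))} \<le> card Q"
        using sub card_mono[of Q] Qm finite_subset by (meson finite_atLeastAtMost)
      then show ?thesis using that unfolding A_def by auto
    qed
    have fA: "finite A" unfolding A_def by auto
    have "Max A = card Q" using inA leA fA by (intro Max_eqI) auto
    then have tau: "eBH_tau \<alpha> m E = card Q" using inA unfolding eBH_tau_def A_def Let_def by auto
    have "eBH \<alpha> m E = Q" unfolding eBH_def Let_def tau using eqQ cQm by auto
    then show ?thesis using False unfolding E_def S_def[symmetric] T_def[symmetric] Q_def by simp
  qed
qed

lemma rej_lemma: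
  assumes Lnn: "\<forall>i. Lv i \<ge> 0" and al: "\<alpha> > 0" and k: "k \<in> {1..m}"
    and ck: "card {j \<in> {1..m}. (1 + Nc n sc Lv (sc (n + j))) / real (n + 1) \<le> \<alpha> * real k / real m} \<ge> k"
  shows "\<exists>t0 \<in> Sset n m sc Lv \<alpha>. \<forall>j \<in> {1..m}.
           (1 + Nc n sc Lv (sc (n + j))) / real (n + 1) \<le> \<alpha> * real k / real m \<longrightarrow> sc (n + j) \<le> t0"
proof -
  define Rej where "Rej = {j \<in> {1..m}. (1 + Nc n sc Lv (sc (n + j))) / real (n + 1) \<le> \<alpha> * real k / real m}"
  have fR: "finite Rej" unfolding Rej_def by auto
  have RN: "Rej \<noteq> {}" using ck k unfolding Rej_def[symmetric] by (auto simp: card_eq_0_iff)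
  define t0 where "t0 = Max ((\<lambda>j. sc (n + j)) ` Rej)"
  have "t0 \<in> (\<lambda>j. sc (n + j)) ` Rej" unfolding t0_def using fR RN by (intro Max_in) auto
  then obtain j0 where j0: "j0 \<in> Rej" "t0 = sc (n + j0)" by auto
  have ge: "sc (n + j) \<le> t0" if "j \<in> Rej" for j unfolding t0_def using fR that by (intro Max_ge) auto
  have t0M: "t0 \<in> sc ` {1..n+m}" using j0 unfolding Rej_def by auto
  have "Rej \<subseteq> {k \<in> {1..m}. sc (n + k) \<le> t0}" using ge unfolding Rej_def by auto
  then have cR: "card Rej \<le> Rc n m sc t0" unfolding Rc_def by (intro card_mono) auto
  have kR: "k \<le> Rc n m sc t0" using cR ck unfolding Rej_def by simp
  have k1: "real k \<ge> 1" and m1: "real m \<ge> 1" using k by auto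
  have p0: "(1 + Nc n sc Lv t0) / real (n + 1) \<le> \<alpha> * real k / real m"
    using j0 unfolding Rej_def by simp
  have Npos: "1 + Nc n sc Lv t0 > 0" using Nc_nonneg[OF Lnn, of n sc t0] by simp
  have "(1 + Nc n sc Lv t0) / real (Rc n m sc t0) * (real m / real (n + 1))
      \<le> (1 + Nc n sc Lv t0) / real k * (real m / real (n + 1))"
    using kR k1 Npos by (intro mult_right_mono divide_left_mono) auto
  also have "\<dots> = ((1 + Nc n sc Lv t0) / real (n + 1)) * (real m / real k)" by simp
  also have "\<dots> \<le> (\<alpha> * real k / real m) * (real m / real k)"
    using p0 k1 m1 by (intro mult_right_mono) auto
  also have "\<dots> = \<alpha>" using k1 m1 by simp
  finally have "t0 \<in> Sset n m sc Lv \<alpha>" unfolding Sset_def using t0M kR k1 by auto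
  moreover have "\<forall>j \<in> {1..m}. (1 + Nc n sc Lv (sc (n + j))) / real (n + 1) \<le> \<alpha> * real k / real m \<longrightarrow> sc (n + j) \<le> t0"
    using ge unfolding Rej_def by blast
  ultimately show ?thesis by blast
qed

lemma aux_eq: fixes a R m K :: real assumes "R \<noteq> 0" "m \<noteq> 0"
  shows "a / K = a / R * (m / K) * R / m"
  using assms by (simp add: field_simps)

lemma BH_form:
  assumes Lnn: "\<forall>i. Lv i \<ge> 0" and al: "\<alpha> > 0"
  shows "BH \<alpha> m (\<lambda>j. (1 + Nc n sc Lv (sc (n + j))) / real (n + 1)) =
    (if Sset n m sc Lv \<alpha> = {} then {} else {j \<in> {1..m}. sc (n + j) \<le> Max (Sset n m sc Lv \<alpha>)})"
proof -
  define p where "p = (\<lambda>j. (1 + Nc n sc Lv (sc (n + j))) / real (n + 1))"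
  define S where "S = Sset n m sc Lv \<alpha>"
  define A where "A = {k \<in> {1..m}. card {j \<in> {1..m}. p j \<le> \<alpha> * real k / real m} \<ge> k}"
  have fS: "finite S" unfolding S_def by (rule Sset_finite)
  have fA: "finite A" unfolding A_def by auto
  have rej: "\<exists>t0 \<in> S. \<forall>j \<in> {1..m}. p j \<le> \<alpha> * real k / real m \<longrightarrow> sc (n + j) \<le> t0" if "k \<in> A" for k
    using rej_lemma[OF Lnn al, of k m n sc] that unfolding A_def p_def S_def by auto
  have BHk: "BH_k \<alpha> m p = (if A = {} then 0 else Max A)" unfolding BH_k_def A_def Let_def by simp
  show ?thesis
  proof (cases "S = {}")
    case True
    then have "A = {}" using rej by blast
    then have "BH \<alpha> m p = {}" unfolding BH_def Let_def BHk by simp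
    then show ?thesis using True unfolding p_def S_def by simp
  next
    case False
    define T where "T = Max S"
    define Q where "Q = {j \<in> {1..m}. sc (n + j) \<le> T}"
    have TS: "T \<in> S" using False fS unfolding T_def by auto
    have leT: "t \<le> T" if "t \<in> S" for t using fS that unfolding T_def by auto
    have Npos: "1 + Nc n sc Lv T > 0" using Nc_nonneg[OF Lnn, of n sc T] by simp
    have cQ: "card Q = Rc n m sc T" unfolding Q_def Rc_def by simp
    have R1: "Rc n m sc T \<ge> 1" and F: "(1 + Nc n sc Lv T) / real (Rc n m sc T) * (real m / real (n + 1)) \<le> \<alpha>"
      using TS unfolding S_def Sset_def by auto
    have Qm: "Q \<subseteq> {1..m}" unfolding Q_def by auto
    have cQm: "card Q \<in> {1..m}" using R1 cQ card_mono[OF _ Qm] by auto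
    have m1: "real m \<ge> 1" using cQm by auto
    have pQ: "p j \<le> \<alpha> * real (card Q) / real m" if "j \<in> Q" for j
    proof -
      have "p j \<le> (1 + Nc n sc Lv T) / real (n + 1)"
        unfolding p_def using that Nc_mono[OF Lnn] unfolding Q_def by (intro divide_right_mono) auto
      also have "\<dots> = ((1 + Nc n sc Lv T) / real (Rc n m sc T) * (real m / real (n + 1))) * real (Rc n m sc T) / real m"
      proof -
        have "real (Rc n m sc T) > 0" "real m > 0" "real (n + 1) > 0" using R1 m1 by auto
        then show ?thesis using aux_eq[of "real (Rc n m sc T)" "real m" "1 + Nc n sc Lv T" "real (n + 1)"] by simp
      qed
      also have "\<dots> \<le> \<alpha> * real (Rc n m sc T) / real m"
        using F R1 m1 by (intro divide_right_mono mult_right_mono) auto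
      finally show ?thesis unfolding cQ .
    qed
    have "Q \<subseteq> {j \<in> {1..m}. p j \<le> \<alpha> * real (card Q) / real m}" using pQ Qm by auto
    then have "card Q \<le> card {j \<in> {1..m}. p j \<le> \<alpha> * real (card Q) / real m}" by (intro card_mono) auto
    then have inA: "card Q \<in> A" unfolding A_def using cQm by auto
    then have AN: "A \<noteq> {}" by auto
    define k where "k = Max A"
    have kA: "k \<in> A" unfolding k_def using AN fA by auto
    have kge: "card Q \<le> k" unfolding k_def using inA fA by auto
    have k1: "k \<noteq> 0" using kA unfolding A_def by auto
    obtain t0 where t0: "t0 \<in> S" "\<forall>j \<in> {1..m}. p j \<le> \<alpha> * real k / real m \<longrightarrow> sc (n + j) \<le> t0"
      using rej[OF kA] by blast
    have sub1: "{j \<in> {1..m}. p j \<le> \<alpha> * real k / real m} \<subseteq> Q"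
      using t0 leT unfolding Q_def by force
    have sub2: "Q \<subseteq> {j \<in> {1..m}. p j \<le> \<alpha> * real k / real m}"
    proof
      fix j assume j: "j \<in> Q"
      have "\<alpha> * real (card Q) / real m \<le> \<alpha> * real k / real m"
        using kge al m1 by (intro divide_right_mono mult_left_mono) auto
      then show "j \<in> {j \<in> {1..m}. p j \<le> \<alpha> * real k / real m}" using pQ[OF j] j Qm by auto
    qed
    have "BH \<alpha> m p = Q" unfolding BH_def Let_def BHk using AN k1 sub1 sub2 unfolding k_def by auto
    then show ?thesis using False unfolding p_def S_def[symmetric] T_def[symmetric] Q_def by simp
  qed
qed



definition Dset :: "nat \<Rightarrow> nat \<Rightarrow> nat set" where "Dset n j = insert (n + j) {1..n}"

definition hk :: "nat \<Rightarrow> nat \<Rightarrow> (nat \<Rightarrow> real) \<Rightarrow> (nat \<Rightarrow> real) \<Rightarrow> real \<Rightarrow> nat \<Rightarrow> nat \<Rightarrow> real" where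
  "hk n m sc Lv \<gamma> j k = (let T = tgam n m sc Lv \<gamma> j (Lv (n + j)) in
     Lv k * of_bool (ereal (sc k) \<le> T) / (\<Sum>a\<in>Dset n j. Lv a * of_bool (ereal (sc a) \<le> T)))"

lemma Dset_fin: "finite (Dset n j)" unfolding Dset_def by simp

lemma FR_sym:
  assumes "j \<ge> 1"
  shows "FR n m sc Lv j t (Lv (n + j)) = (\<Sum>a\<in>Dset n j. Lv a * of_bool (sc a \<le> t))
     / (1 + real (card {k \<in> {1..m}. k \<noteq> j \<and> sc (n + k) \<le> t})) * (real m / real (n + 1))"
  unfolding FR_def Dset_def using assms by (simp del: sum_mult_of_bool_eq)

lemma perm_facts:
  assumes i: "i \<in> {1..n}" and j: "j \<in> {1..m}"
  shows "Transposition.transpose i (n + j) permutes {1..n+m}" "Transposition.transpose i (n + j) permutes Dset n j"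
  using i j unfolding Dset_def by (auto intro!: permutes_swap_id)

lemma tgam_perm:
  assumes i: "i \<in> {1..n}" and j: "j \<in> {1..m}"
  defines "\<pi> \<equiv> Transposition.transpose i (n + j)"
  shows "tgam n m (sc \<circ> \<pi>) (Lv \<circ> \<pi>) \<gamma> j ((Lv \<circ> \<pi>) (n + j)) = tgam n m sc Lv \<gamma> j (Lv (n + j))"
proof -
  have p1: "\<pi> permutes {1..n+m}" and p2: "\<pi> permutes Dset n j" using perm_facts[OF i j] unfolding \<pi>_def by auto
  have img: "(sc \<circ> \<pi>) ` {1..n+m} = sc ` {1..n+m}" 
  proof -
    have "(sc \<circ> \<pi>) ` {1..n+m} = sc ` (\<pi> ` {1..n+m})" by (simp add: image_comp)
    then show ?thesis using permutes_image[OF p1] by simp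
  qed
  have FReq: "FR n m (sc \<circ> \<pi>) (Lv \<circ> \<pi>) j t ((Lv \<circ> \<pi>) (n + j)) = FR n m sc Lv j t (Lv (n + j))" for t
  proof -
    have s1: "(\<Sum>a\<in>Dset n j. (Lv \<circ> \<pi>) a * of_bool ((sc \<circ> \<pi>) a \<le> t)) = (\<Sum>a\<in>Dset n j. Lv a * of_bool (sc a \<le> t))"
      using sum.permute[OF p2, of "\<lambda>a. Lv a * of_bool (sc a \<le> t)"] by (simp add: comp_def)
    have "{k \<in> {1..m}. k \<noteq> j \<and> (sc \<circ> \<pi>) (n + k) \<le> t} = {k \<in> {1..m}. k \<noteq> j \<and> sc (n + k) \<le> t}"
      using i unfolding \<pi>_def by (auto simp: transpose_def)
    then show ?thesis using FR_sym[of j n m "sc \<circ> \<pi>" "Lv \<circ> \<pi>" t] FR_sym[of j n m sc Lv t] s1 j by simp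
  qed
  show ?thesis unfolding tgam_def img FReq by simp
qed

lemma hk_perm:
  assumes i: "i \<in> {1..n}" and j: "j \<in> {1..m}"
  defines "\<pi> \<equiv> Transposition.transpose i (n + j)"
  shows "hk n m (sc \<circ> \<pi>) (Lv \<circ> \<pi>) \<gamma> j (n + j) = hk n m sc Lv \<gamma> j i"
proof -
  have p2: "\<pi> permutes Dset n j" using perm_facts[OF i j] unfolding \<pi>_def by auto
  define T where "T = tgam n m sc Lv \<gamma> j (Lv (n + j))"
  have TT: "tgam n m (sc \<circ> \<pi>) (Lv \<circ> \<pi>) \<gamma> j ((Lv \<circ> \<pi>) (n + j)) = T"
    unfolding T_def \<pi>_def by (rule tgam_perm[OF i j])
  have s1: "(\<Sum>a\<in>Dset n j. (Lv \<circ> \<pi>) a * of_bool (ereal ((sc \<circ> \<pi>) a) \<le> T)) = (\<Sum>a\<in>Dset n j. Lv a * of_bool (ereal (sc a) \<le> T))"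
    using sum.permute[OF p2, of "\<lambda>a. Lv a * of_bool (ereal (sc a) \<le> T)"] by (simp add: comp_def)
  have "\<pi> (n + j) = i" unfolding \<pi>_def by simp
  then show ?thesis using TT s1 unfolding hk_def Let_def T_def[symmetric] by (simp add: comp_def)
qed

lemma FR_cong:
  assumes j: "j \<in> {1..m}" and sc: "\<forall>i\<in>{1..n+m}. sc i = sc' i" and Lv: "\<forall>i\<in>{1..n}. Lv i = Lv' i"
  shows "FR n m sc Lv j t l = FR n m sc' Lv' j t l"
proof -
  have "sc (n + j) = sc' (n + j)" using sc j by auto
  moreover have "(\<Sum>i=1..n. Lv i * of_bool (sc i \<le> t)) = (\<Sum>i=1..n. Lv' i * of_bool (sc' i \<le> t))"
    using sc Lv by (intro sum.cong) auto
  moreover have "{k \<in> {1..m}. k \<noteq> j \<and> sc (n + k) \<le> t} = {k \<in> {1..m}. k \<noteq> j \<and> sc' (n + k) \<le> t}"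
    using sc by auto
  ultimately show ?thesis unfolding FR_def by simp
qed

lemma tgam_cong:
  assumes j: "j \<in> {1..m}" and sc: "\<forall>i\<in>{1..n+m}. sc i = sc' i" and Lv: "\<forall>i\<in>{1..n}. Lv i = Lv' i"
  shows "tgam n m sc Lv \<gamma> j l = tgam n m sc' Lv' \<gamma> j l"
proof -
  have "sc ` {1..n+m} = sc' ` {1..n+m}" using sc by auto
  then show ?thesis unfolding tgam_def using FR_cong[OF j sc Lv] by simp
qed

lemma Eval_cong:
  assumes j: "j \<in> {1..m}" and sc: "\<forall>i\<in>{1..n+m}. sc i = sc' i" and Lv: "\<forall>i\<in>{1..n}. Lv i = Lv' i"
  shows "Eval n m sc Lv \<gamma> j l = Eval n m sc' Lv' \<gamma> j l"
proof -
  have T: "tgam n m sc Lv \<gamma> j l = tgam n m sc' Lv' \<gamma> j l" by (rule tgam_cong[OF j sc Lv])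
  have "sc (n + j) = sc' (n + j)" using sc j by auto
  moreover have "(\<Sum>i=1..n. Lv i * of_bool (ereal (sc i) \<le> tgam n m sc' Lv' \<gamma> j l)) =
      (\<Sum>i=1..n. Lv' i * of_bool (ereal (sc' i) \<le> tgam n m sc' Lv' \<gamma> j l))"
    using sc Lv by (intro sum.cong) auto
  ultimately show ?thesis unfolding Eval_def Let_def T by (simp del: sum_mult_of_bool_eq)
qed

lemma hk_cong:
  assumes j: "j \<in> {1..m}" and sc: "\<forall>i\<in>{1..n+m}. sc i = sc' i" and Lv: "\<forall>i\<in>{1..n+m}. Lv i = Lv' i"
    and k: "k \<in> {1..n+m}"
  shows "hk n m sc Lv \<gamma> j k = hk n m sc' Lv' \<gamma> j k"
proof -
  have Lv1: "\<forall>i\<in>{1..n}. Lv i = Lv' i" using Lv by auto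
  have "Lv (n + j) = Lv' (n + j)" using Lv j by auto
  then have T: "tgam n m sc Lv \<gamma> j (Lv (n + j)) = tgam n m sc' Lv' \<gamma> j (Lv' (n + j))"
    using tgam_cong[OF j sc Lv1] by simp
  have D: "Dset n j \<subseteq> {1..n+m}" using j unfolding Dset_def by auto
  have "(\<Sum>a\<in>Dset n j. Lv a * of_bool (ereal (sc a) \<le> tgam n m sc' Lv' \<gamma> j (Lv' (n + j)))) =
      (\<Sum>a\<in>Dset n j. Lv' a * of_bool (ereal (sc' a) \<le> tgam n m sc' Lv' \<gamma> j (Lv' (n + j))))"
    using sc Lv D by (intro sum.cong) auto
  moreover have "sc k = sc' k" "Lv k = Lv' k" using sc Lv k by auto
  ultimately show ?thesis unfolding hk_def Let_def T by (simp del: sum_mult_of_bool_eq)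
qed

lemma sum_Dset:
  assumes "j \<ge> 1"
  shows "(\<Sum>a\<in>Dset n j. f a) = f (n + j) + (\<Sum>a=1..n. f a)"
  unfolding Dset_def using assms by simp

lemma G_hk:
  assumes j: "j \<in> {1..m}" and Lnn: "\<forall>i. Lv i \<ge> 0" and L01: "Lv (n + j) = 0 \<or> Lv (n + j) = 1"
  shows "Lv (n + j) * real_of_ereal (Eval n m sc Lv \<gamma> j 1) = real (n + 1) * hk n m sc Lv \<gamma> j (n + j)"
proof (cases "Lv (n + j) = 0")
  case True
  then show ?thesis unfolding hk_def Let_def by simp
next
  case False
  then have L1: "Lv (n + j) = 1" using L01 by auto
  define T where "T = tgam n m sc Lv \<gamma> j 1"
  define S0 where "S0 = (\<Sum>i=1..n. Lv i * of_bool (ereal (sc i) \<le> T))"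
  have S0nn: "S0 \<ge> 0" unfolding S0_def using Lnn by (intro sum_nonneg) auto
  have sD: "(\<Sum>a\<in>Dset n j. Lv a * of_bool (ereal (sc a) \<le> T)) = of_bool (ereal (sc (n + j)) \<le> T) + S0"
    using sum_Dset[where j=j and n=n and f="\<lambda>a. Lv a * of_bool (ereal (sc a) \<le> T)"] j L1 unfolding S0_def
    by (simp del: sum_mult_of_bool_eq)
  have hkv: "hk n m sc Lv \<gamma> j (n + j) = of_bool (ereal (sc (n + j)) \<le> T) / (of_bool (ereal (sc (n + j)) \<le> T) + S0)"
    unfolding hk_def Let_def L1 T_def[symmetric] sD by (simp add: L1)
  have Ev: "Eval n m sc Lv \<gamma> j 1 = (if ereal (sc (n + j)) \<le> T then ereal (real (n + 1) / (1 + S0)) else 0)"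
    using S0nn unfolding Eval_def Let_def T_def[symmetric] S0_def[symmetric] by auto
  show ?thesis using L1 hkv Ev S0nn by simp
qed

lemma Eval_fin:
  assumes Lnn: "\<forall>i. Lv i \<ge> 0"
  shows "Eval n m sc Lv \<gamma> j 1 = ereal (real_of_ereal (Eval n m sc Lv \<gamma> j 1))
    \<and> real_of_ereal (Eval n m sc Lv \<gamma> j 1) \<ge> 0"
proof -
  define T where "T = tgam n m sc Lv \<gamma> j 1"
  define S0 where "S0 = (\<Sum>i=1..n. Lv i * of_bool (ereal (sc i) \<le> T))"
  have S0nn: "S0 \<ge> 0" unfolding S0_def using Lnn by (intro sum_nonneg) auto
  have Ev: "Eval n m sc Lv \<gamma> j 1 = (if ereal (sc (n + j)) \<le> T then ereal (real (n + 1) / (1 + S0)) else 0)"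
    using S0nn unfolding Eval_def Let_def T_def[symmetric] S0_def[symmetric] by auto
  show ?thesis unfolding Ev using S0nn by auto
qed

lemma hk_bounds:
  assumes Lnn: "\<forall>i. Lv i \<ge> 0" and k: "k \<in> Dset n j"
  shows "0 \<le> hk n m sc Lv \<gamma> j k" "hk n m sc Lv \<gamma> j k \<le> 1"
proof -
  define T where "T = tgam n m sc Lv \<gamma> j (Lv (n + j))"
  define f where "f = (\<lambda>a. Lv a * of_bool (ereal (sc a) \<le> T))"
  have fnn: "f a \<ge> 0" for a unfolding f_def using Lnn by auto
  have h: "hk n m sc Lv \<gamma> j k = f k / sum f (Dset n j)" unfolding hk_def Let_def T_def[symmetric] f_def ..
  have le: "f k \<le> sum f (Dset n j)" using k fnn Dset_fin by (intro member_le_sum) auto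
  have snn: "sum f (Dset n j) \<ge> 0" using fnn by (intro sum_nonneg) auto
  show "0 \<le> hk n m sc Lv \<gamma> j k" unfolding h using fnn snn by auto
  show "hk n m sc Lv \<gamma> j k \<le> 1" unfolding h using fnn le snn
    by (cases "sum f (Dset n j) = 0") (auto simp: divide_le_eq_1)
qed

lemma hk_sum:
  assumes Lnn: "\<forall>i. Lv i \<ge> 0"
  shows "(\<Sum>k\<in>Dset n j. hk n m sc Lv \<gamma> j k) \<le> 1"
proof -
  define T where "T = tgam n m sc Lv \<gamma> j (Lv (n + j))"
  define f where "f = (\<lambda>a. Lv a * of_bool (ereal (sc a) \<le> T))"
  have fnn: "f a \<ge> 0" for a unfolding f_def using Lnn by auto
  have h: "hk n m sc Lv \<gamma> j k = f k / sum f (Dset n j)" for k unfolding hk_def Let_def T_def[symmetric] f_def ..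
  have "(\<Sum>k\<in>Dset n j. hk n m sc Lv \<gamma> j k) = sum f (Dset n j) / sum f (Dset n j)"
    unfolding h sum_divide_distrib[symmetric] ..
  then show ?thesis by (cases "sum f (Dset n j) = 0") auto
qed

lemma fdp_bound:
  fixes E :: "nat \<Rightarrow> ereal" and e Lt :: "nat \<Rightarrow> real"
  assumes al: "\<alpha> > 0" and Ee: "\<forall>j. E j = ereal (e j)" and enn: "\<forall>j. e j \<ge> 0" and Ltnn: "\<forall>j. Lt j \<ge> 0"
  shows "(\<Sum>j\<in>eBH \<alpha> m E. Lt j) / max 1 (real (card (eBH \<alpha> m E)))
     \<le> \<alpha> / real m * (\<Sum>j\<in>{1..m}. Lt j * e j)"
proof -
  have rhs: "0 \<le> \<alpha> / real m * (\<Sum>j\<in>{1..m}. Lt j * e j)"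
    using al enn Ltnn by (intro mult_nonneg_nonneg sum_nonneg) auto
  define A where "A = {\<tau> \<in> {1..m}. card {j \<in> {1..m}. E j \<ge> ereal (real m / (\<alpha> * real \<tau>))} \<ge> \<tau>}"
  define \<tau> where "\<tau> = eBH_tau \<alpha> m E"
  show ?thesis
  proof (cases "\<tau> = 0")
    case True
    then show ?thesis using rhs unfolding eBH_def Let_def \<tau>_def by simp
  next
    case False
    then have AN: "A \<noteq> {}" and tM: "\<tau> = Max A" unfolding \<tau>_def eBH_tau_def A_def Let_def by (auto split: if_splits)
    have "\<tau> \<in> A" unfolding tM using AN by (intro Max_in) (auto simp: A_def)
    then have t1: "\<tau> \<in> {1..m}" and ct: "card {j \<in> {1..m}. E j \<ge> ereal (real m / (\<alpha> * real \<tau>))} \<ge> \<tau>"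
      unfolding A_def by auto
    define Sp where "Sp = {j \<in> {1..m}. E j \<ge> ereal (real m / (\<alpha> * real \<tau>))}"
    have Sp: "eBH \<alpha> m E = Sp" unfolding eBH_def Let_def \<tau>_def[symmetric] Sp_def using False by simp
    have tpos: "real \<tau> > 0" "real m > 0" using t1 by auto
    have mx: "max 1 (real (card Sp)) \<ge> real \<tau>" using ct unfolding Sp_def by auto
    have ej: "1 / real \<tau> \<le> \<alpha> * e j / real m" if "j \<in> Sp" for j
    proof -
      have "real m / (\<alpha> * real \<tau>) \<le> e j" using that Ee unfolding Sp_def by auto
      then show ?thesis using tpos al by (simp add: field_simps)
    qed
    have "(\<Sum>j\<in>Sp. Lt j) / max 1 (real (card Sp)) \<le> (\<Sum>j\<in>Sp. Lt j) / real \<tau>"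
      using mx tpos Ltnn by (intro divide_left_mono sum_nonneg) auto
    also have "\<dots> = (\<Sum>j\<in>Sp. Lt j * (1 / real \<tau>))" by (simp add: sum_divide_distrib)
    also have "\<dots> \<le> (\<Sum>j\<in>Sp. Lt j * (\<alpha> * e j / real m))"
      using ej Ltnn by (intro sum_mono mult_left_mono) auto
    also have "\<dots> \<le> (\<Sum>j\<in>{1..m}. Lt j * (\<alpha> * e j / real m))"
      using Ltnn enn al unfolding Sp_def by (intro sum_mono2) auto
    also have "\<dots> = \<alpha> / real m * (\<Sum>j\<in>{1..m}. Lt j * e j)"
      by (simp add: sum_distrib_left field_simps)
    finally show ?thesis unfolding Sp .
  qed
qed



lemma card_sum_bool: "finite A \<Longrightarrow> real (card {k \<in> A. P k}) = (\<Sum>k\<in>A. of_bool (P k))"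
  by (simp add: Collect_conj_eq Int_commute inf_set_def)

lemma meas_FR:
  assumes sc[measurable]: "\<And>i. (\<lambda>\<omega>. sc \<omega> i) \<in> borel_measurable N"
    and Lv[measurable]: "\<And>i. (\<lambda>\<omega>. Lv \<omega> i) \<in> borel_measurable N"
    and lf[measurable]: "lf \<in> borel_measurable N" and tf[measurable]: "tf \<in> borel_measurable N"
  shows "(\<lambda>\<omega>. FR n m (sc \<omega>) (Lv \<omega>) j (tf \<omega>) (lf \<omega>)) \<in> borel_measurable N"
proof -
  have "(\<lambda>\<omega>. FR n m (sc \<omega>) (Lv \<omega>) j (tf \<omega>) (lf \<omega>)) = (\<lambda>\<omega>.
     (lf \<omega> * of_bool (sc \<omega> (n + j) \<le> tf \<omega>) + (\<Sum>i=1..n. Lv \<omega> i * of_bool (sc \<omega> i \<le> tf \<omega>)))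
     / (1 + (\<Sum>k\<in>{1..m}. of_bool (k \<noteq> j \<and> sc \<omega> (n + k) \<le> tf \<omega>)))
     * (real m / real (n + 1)))"
    unfolding FR_def by (subst card_sum_bool) auto
  also have "\<dots> \<in> borel_measurable N" by measurable
  finally show ?thesis .
qed

lemma tgam_Max:
  "tgam n m sc Lv \<gamma> j l = (if n + m = 0 then -\<infinity> else
     Max ((\<lambda>b. if FR n m sc Lv j (sc b) l \<le> \<gamma> then ereal (sc b) else -\<infinity>) ` {1..n+m}))"
proof -
  define P where "P = (\<lambda>t. FR n m sc Lv j t l \<le> \<gamma>)"
  define A where "A = {t \<in> sc ` {1..n+m}. P t}"
  define g where "g = (\<lambda>b. if P (sc b) then ereal (sc b) else -\<infinity>)"
  have tg: "tgam n m sc Lv \<gamma> j l = (if A = {} then -\<infinity> else ereal (Max A))"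
    unfolding tgam_def A_def P_def Let_def by simp
  show ?thesis
  proof (cases "n + m = 0")
    case True
    then have "A = {}" unfolding A_def by auto
    then show ?thesis using True tg by simp
  next
    case False
    then have IN: "{1..n+m} \<noteq> {}" by auto
    have fg: "finite (g ` {1..n+m})" "g ` {1..n+m} \<noteq> {}" using IN by auto
    have "Max (g ` {1..n+m}) = (if A = {} then -\<infinity> else ereal (Max A))"
    proof (cases "A = {}")
      case True
      then have "g b = -\<infinity>" if "b \<in> {1..n+m}" for b using that unfolding g_def A_def by auto
      then have "g ` {1..n+m} = {-\<infinity>}" using IN by auto
      then show ?thesis using True by simp
    next
      case False
      have fA: "finite A" unfolding A_def by auto
      have MA: "Max A \<in> A" using False fA by auto
      then obtain b0 where b0: "b0 \<in> {1..n+m}" "sc b0 = Max A" "P (sc b0)" unfolding A_def by auto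
      have "Max (g ` {1..n+m}) = ereal (Max A)"
      proof (rule antisym)
        show "Max (g ` {1..n+m}) \<le> ereal (Max A)"
        proof (rule Max.boundedI[OF fg])
          fix x assume "x \<in> g ` {1..n+m}"
          then obtain b where b: "b \<in> {1..n+m}" "x = g b" by auto
          show "x \<le> ereal (Max A)"
          proof (cases "P (sc b)")
            case True
            then have "sc b \<in> A" using b unfolding A_def by auto
            then show ?thesis using b True fA unfolding g_def by auto
          qed (use b in \<open>auto simp: g_def\<close>)
        qed
        show "ereal (Max A) \<le> Max (g ` {1..n+m})"
        proof -
          have "g b0 = ereal (Max A)" using b0 unfolding g_def by simp
          moreover have "g b0 \<in> g ` {1..n+m}" using b0 by auto
          ultimately show ?thesis using fg Max_ge by metis
        qed
      qed
      then show ?thesis using False by simp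
    qed
    then show ?thesis using False tg unfolding g_def P_def by simp
  qed
qed

lemma meas_tgam:
  assumes sc[measurable]: "\<And>i. (\<lambda>\<omega>. sc \<omega> i) \<in> borel_measurable N"
    and Lv[measurable]: "\<And>i. (\<lambda>\<omega>. Lv \<omega> i) \<in> borel_measurable N"
    and lf[measurable]: "lf \<in> borel_measurable N"
  shows "(\<lambda>\<omega>. tgam n m (sc \<omega>) (Lv \<omega>) \<gamma> j (lf \<omega>)) \<in> borel_measurable N"
proof -
  have FRm[measurable]: "(\<lambda>\<omega>. FR n m (sc \<omega>) (Lv \<omega>) j (sc \<omega> b) (lf \<omega>)) \<in> borel_measurable N" for b
    by (rule meas_FR) auto
  show ?thesis unfolding tgam_Max by measurable
qed

lemma meas_Eval:
  assumes sc[measurable]: "\<And>i. (\<lambda>\<omega>. sc \<omega> i) \<in> borel_measurable N"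
    and Lv[measurable]: "\<And>i. (\<lambda>\<omega>. Lv \<omega> i) \<in> borel_measurable N"
  shows "(\<lambda>\<omega>. Eval n m (sc \<omega>) (Lv \<omega>) \<gamma> j 1) \<in> borel_measurable N"
proof -
  have T[measurable]: "(\<lambda>\<omega>. tgam n m (sc \<omega>) (Lv \<omega>) \<gamma> j 1) \<in> borel_measurable N"
    by (rule meas_tgam) auto
  show ?thesis unfolding Eval_def Let_def by measurable
qed

lemma meas_hk:
  assumes sc[measurable]: "\<And>i. (\<lambda>\<omega>. sc \<omega> i) \<in> borel_measurable N"
    and Lv[measurable]: "\<And>i. (\<lambda>\<omega>. Lv \<omega> i) \<in> borel_measurable N"
  shows "(\<lambda>\<omega>. hk n m (sc \<omega>) (Lv \<omega>) \<gamma> j k) \<in> borel_measurable N"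
proof -
  have T[measurable]: "(\<lambda>\<omega>. tgam n m (sc \<omega>) (Lv \<omega>) \<gamma> j (Lv \<omega> (n + j))) \<in> borel_measurable N"
    by (rule meas_tgam) auto
  show ?thesis unfolding hk_def Let_def by measurable
qed



lemma conf_pval_eq:
  "conf_pval n s c X Y j = (1 + Nc n (\<lambda>i. s (X i)) (\<lambda>i. of_bool (Y i \<le> c)) (s (X (n + j)))) / real (n + 1)"
proof -
  have "{i \<in> {1..n}. Vscore s c (X i) (Y i) \<le> Vscore s c (X (n + j)) c}
      = {i \<in> {1..n}. Y i \<le> c \<and> s (X i) \<le> s (X (n + j))}"
    unfolding Vscore_def by (auto simp: not_less)
  then have "real (card {i \<in> {1..n}. Vscore s c (X i) (Y i) \<le> Vscore s c (X (n + j)) c})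
     = (\<Sum>i=1..n. of_bool (Y i \<le> c \<and> s (X i) \<le> s (X (n + j))))"
    by (simp only: card_sum_bool[OF finite_atLeastAtMost])
  also have "\<dots> = Nc n (\<lambda>i. s (X i)) (\<lambda>i. of_bool (Y i \<le> c)) (s (X (n + j)))"
    unfolding Nc_def by (intro sum.cong) auto
  finally show ?thesis unfolding conf_pval_def by simp
qed

theorem corollary5p1:
  fixes M :: "'w measure" and MX :: "'x measure"
    and X :: "'w \<Rightarrow> nat \<Rightarrow> 'x" and Y :: "'w \<Rightarrow> nat \<Rightarrow> real"
    and s :: "'x \<Rightarrow> real" and c \<gamma> \<alpha> :: real and n m :: nat
    and L :: "'w \<Rightarrow> nat \<Rightarrow> real" and Sp SCS :: "'w \<Rightarrow> nat set"
  assumes prob: "prob_space M"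
    and meas: "\<forall>i\<in>{1..n+m}. (\<lambda>\<omega>. (X \<omega> i, Y \<omega> i)) \<in> M \<rightarrow>\<^sub>M (MX \<Otimes>\<^sub>M borel)"
    and exch: "\<forall>\<pi>. \<pi> permutes {1..n+m} \<longrightarrow>
       distr M (PiM {1..n+m} (\<lambda>_. MX \<Otimes>\<^sub>M borel)) (\<lambda>\<omega>. \<lambda>i\<in>{1..n+m}. (X \<omega> (\<pi> i), Y \<omega> (\<pi> i)))
       = distr M (PiM {1..n+m} (\<lambda>_. MX \<Otimes>\<^sub>M borel)) (\<lambda>\<omega>. \<lambda>i\<in>{1..n+m}. (X \<omega> i, Y \<omega> i))"
    and s_meas: "s \<in> MX \<rightarrow>\<^sub>M borel"
    and s_range: "\<forall>x\<in>space MX. 0 \<le> s x \<and> s x \<le> 1"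
    and gam: "\<gamma> > 0"
    and alpha: "0 < \<alpha>" "\<alpha> < 1"
    and L_def: "L = (\<lambda>\<omega> i. of_bool (Y \<omega> i \<le> c))"
    and Sp_def: "Sp = (\<lambda>\<omega>. eBH \<alpha> m (\<lambda>j. Eval n m (\<lambda>i. s (X \<omega> i)) (L \<omega>) \<gamma> j 1))"
    and SCS_def: "SCS = (\<lambda>\<omega>. BH \<alpha> m (\<lambda>j. conf_pval n s c (X \<omega>) (Y \<omega>) j))"
  shows "(\<integral>\<omega>. (\<Sum>j\<in>Sp \<omega>. L \<omega> (n + j)) / max 1 (real (card (Sp \<omega>))) \<partial>M) \<le> \<alpha>
         \<and> (\<gamma> = \<alpha> \<longrightarrow> (\<forall>\<omega>\<in>space M. Sp \<omega> = SCS \<omega>))"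
proof
  interpret prob_space M by (rule prob)
  define I where "I = {1..n+m}"
  define Pm where "Pm = PiM I (\<lambda>_. MX \<Otimes>\<^sub>M (borel :: real measure))"
  define Z where "Z = (\<lambda>\<omega>. \<lambda>i\<in>I. (X \<omega> i, Y \<omega> i))"
  define scz where "scz = (\<lambda>(z::nat \<Rightarrow> 'x \<times> real) i. if i \<in> I then s (fst (z i)) else 0)"
  define Lz where "Lz = (\<lambda>(z::nat \<Rightarrow> 'x \<times> real) i. if i \<in> I then of_bool (snd (z i) \<le> c) else (0::real))"
  define Phi where "Phi = (\<lambda>j k z. hk n m (scz z) (Lz z) \<gamma> j k)"
  have Lnn: "\<forall>i. L \<omega> i \<ge> 0" for \<omega> unfolding L_def by auto
  have L01: "L \<omega> i = 0 \<or> L \<omega> i = 1" for \<omega> i unfolding L_def by auto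
  have Zm: "Z \<in> M \<rightarrow>\<^sub>M Pm" unfolding Z_def Pm_def using meas unfolding I_def
    by (intro measurable_restrict) auto
  have sczm: "(\<lambda>z. scz z i) \<in> borel_measurable Pm" for i
  proof (cases "i \<in> I")
    case True
    have "(\<lambda>z. s (fst (z i))) \<in> borel_measurable Pm"
      unfolding Pm_def using True s_meas by measurable
    then show ?thesis unfolding scz_def using True by simp
  qed (simp add: scz_def)
  have Lzm: "(\<lambda>z. Lz z i) \<in> borel_measurable Pm" for i
  proof (cases "i \<in> I")
    case True
    have "(\<lambda>z. of_bool (snd (z i) \<le> c) :: real) \<in> borel_measurable Pm"
      unfolding Pm_def using True by measurable
    then show ?thesis unfolding Lz_def using True by simp
  qed (simp add: Lz_def)
  have Phim: "Phi j k \<in> borel_measurable Pm" for j k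
    unfolding Phi_def by (rule meas_hk[OF sczm Lzm])
  show "(\<integral>\<omega>. (\<Sum>j\<in>Sp \<omega>. L \<omega> (n + j)) / max 1 (real (card (Sp \<omega>))) \<partial>M) \<le> \<alpha>"
  proof -
    have Lznn: "\<forall>i. Lz z i \<ge> 0" for z unfolding Lz_def by auto
    have agree_sc: "\<forall>i\<in>I. scz (Z \<omega>) i = s (X \<omega> i)" for \<omega> unfolding scz_def Z_def by auto
    have agree_L: "\<forall>i\<in>I. Lz (Z \<omega>) i = L \<omega> i" for \<omega> unfolding Lz_def Z_def L_def by auto
    have PhiZm: "(\<lambda>\<omega>. Phi j k (Z \<omega>)) \<in> borel_measurable M" for j k
      using measurable_compose[OF Zm Phim] by (simp add: comp_def)
    have intPhi: "integrable M (\<lambda>\<omega>. Phi j k (Z \<omega>))" if "k \<in> Dset n j" for j k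
    proof (rule integrable_const_bound[where B=1])
      show "AE \<omega> in M. norm (Phi j k (Z \<omega>)) \<le> 1"
        using hk_bounds[OF Lznn that] unfolding Phi_def by auto
    qed (rule PhiZm)
    have key: "real (n + 1) * (\<integral>\<omega>. Phi j (n + j) (Z \<omega>) \<partial>M) \<le> 1" if j: "j \<in> {1..m}" for j
    proof -
      have eqi: "(\<integral>\<omega>. Phi j (n + j) (Z \<omega>) \<partial>M) = (\<integral>\<omega>. Phi j i (Z \<omega>) \<partial>M)" if i: "i \<in> {1..n}" for i
      proof -
        define \<pi> where "\<pi> = Transposition.transpose i (n + j)"
        have p1: "\<pi> permutes I" unfolding \<pi>_def I_def using perm_facts[OF i j] by auto
        have pin: "\<pi> k \<in> I" if "k \<in> I" for k using permutes_in_image[OF p1] that by auto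
        define Zp where "Zp = (\<lambda>\<omega>. \<lambda>k\<in>I. (X \<omega> (\<pi> k), Y \<omega> (\<pi> k)))"
        have Zpm: "Zp \<in> M \<rightarrow>\<^sub>M Pm" unfolding Zp_def Pm_def using meas pin unfolding I_def
          by (intro measurable_restrict) auto
        have dd: "distr M Pm Zp = distr M Pm Z"
          using exch p1 unfolding Pm_def Zp_def Z_def I_def by auto
        have pw: "Phi j (n + j) (Zp \<omega>) = Phi j i (Z \<omega>)" for \<omega>
        proof -
          have a1: "\<forall>k\<in>{1..n+m}. scz (Zp \<omega>) k = (scz (Z \<omega>) \<circ> \<pi>) k"
            using pin unfolding scz_def Zp_def Z_def I_def by auto
          have a2: "\<forall>k\<in>{1..n+m}. Lz (Zp \<omega>) k = (Lz (Z \<omega>) \<circ> \<pi>) k"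
            using pin unfolding Lz_def Zp_def Z_def I_def by auto
          have "Phi j (n + j) (Zp \<omega>) = hk n m (scz (Z \<omega>) \<circ> \<pi>) (Lz (Z \<omega>) \<circ> \<pi>) \<gamma> j (n + j)"
            unfolding Phi_def using j by (intro hk_cong[OF j a1 a2]) auto
          also have "\<dots> = hk n m (scz (Z \<omega>)) (Lz (Z \<omega>)) \<gamma> j i"
            unfolding \<pi>_def by (rule hk_perm[OF i j])
          finally show ?thesis unfolding Phi_def .
        qed
        have "(\<integral>\<omega>. Phi j (n + j) (Z \<omega>) \<partial>M) = integral\<^sup>L (distr M Pm Z) (Phi j (n + j))"
          using integral_distr[OF Zm Phim] by simp
        also have "\<dots> = integral\<^sup>L (distr M Pm Zp) (Phi j (n + j))" unfolding dd ..
        also have "\<dots> = (\<integral>\<omega>. Phi j (n + j) (Zp \<omega>) \<partial>M)"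
          using integral_distr[OF Zpm Phim] by simp
        also have "\<dots> = (\<integral>\<omega>. Phi j i (Z \<omega>) \<partial>M)" unfolding pw ..
        finally show ?thesis .
      qed
      have Dj: "k \<in> Dset n j" if "k \<in> {1..n}" for k using that unfolding Dset_def by auto
      have Dnj: "n + j \<in> Dset n j" unfolding Dset_def by auto
      have "(\<Sum>k\<in>Dset n j. (\<integral>\<omega>. Phi j k (Z \<omega>) \<partial>M))
          = (\<integral>\<omega>. Phi j (n + j) (Z \<omega>) \<partial>M) + (\<Sum>k=1..n. (\<integral>\<omega>. Phi j k (Z \<omega>) \<partial>M))"
        using sum_Dset[where j=j and n=n] j by auto
      also have "\<dots> = real (n + 1) * (\<integral>\<omega>. Phi j (n + j) (Z \<omega>) \<partial>M)"
      proof -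
        have "(\<Sum>k=1..n. (\<integral>\<omega>. Phi j k (Z \<omega>) \<partial>M)) = (\<Sum>k=1..n. (\<integral>\<omega>. Phi j (n + j) (Z \<omega>) \<partial>M))"
          using eqi by (intro sum.cong) auto
        then show ?thesis by (simp add: algebra_simps)
      qed
      finally have s1: "real (n + 1) * (\<integral>\<omega>. Phi j (n + j) (Z \<omega>) \<partial>M)
          = (\<Sum>k\<in>Dset n j. (\<integral>\<omega>. Phi j k (Z \<omega>) \<partial>M))" ..
      also have "\<dots> = (\<integral>\<omega>. (\<Sum>k\<in>Dset n j. Phi j k (Z \<omega>)) \<partial>M)"
        using Bochner_Integration.integral_sum[where M=M and I="Dset n j" and f="\<lambda>k \<omega>. Phi j k (Z \<omega>)"] intPhi by auto
      also have "\<dots> \<le> (\<integral>\<omega>. 1 \<partial>M)"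
        using intPhi hk_sum[OF Lznn] unfolding Phi_def by (intro integral_mono) auto
      also have "\<dots> = 1" by (simp add: prob_space)
      finally show ?thesis .
    qed
    define E where "E = (\<lambda>\<omega> j. Eval n m (\<lambda>i. s (X \<omega> i)) (L \<omega>) \<gamma> j 1)"
    define B where "B = (\<lambda>\<omega>. \<alpha> / real m * (\<Sum>j\<in>{1..m}. L \<omega> (n + j) * real_of_ereal (E \<omega> j)))"
    define FDP where "FDP = (\<lambda>\<omega>. (\<Sum>j\<in>Sp \<omega>. L \<omega> (n + j)) / max 1 (real (card (Sp \<omega>))))"
    have le: "FDP \<omega> \<le> B \<omega>" for \<omega>
    proof -
      have "\<forall>j. E \<omega> j = ereal (real_of_ereal (E \<omega> j))" "\<forall>j. real_of_ereal (E \<omega> j) \<ge> 0"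
        using Eval_fin[OF Lnn] unfolding E_def by auto
      from fdp_bound[OF alpha(1) this, of "\<lambda>j. L \<omega> (n + j)" m] show ?thesis
        using Lnn unfolding FDP_def B_def Sp_def E_def by auto
    qed
    have Beq: "B \<omega> = \<alpha> / real m * (\<Sum>j\<in>{1..m}. real (n + 1) * Phi j (n + j) (Z \<omega>))" for \<omega>
    proof -
      have "L \<omega> (n + j) * real_of_ereal (E \<omega> j) = real (n + 1) * Phi j (n + j) (Z \<omega>)" if j: "j \<in> {1..m}" for j
      proof -
        have "L \<omega> (n + j) * real_of_ereal (E \<omega> j) = real (n + 1) * hk n m (\<lambda>i. s (X \<omega> i)) (L \<omega>) \<gamma> j (n + j)"
          unfolding E_def by (rule G_hk[OF j Lnn L01])
        also have "hk n m (\<lambda>i. s (X \<omega> i)) (L \<omega>) \<gamma> j (n + j) = Phi j (n + j) (Z \<omega>)"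
          unfolding Phi_def using agree_sc agree_L j unfolding I_def
          by (intro hk_cong) auto
        finally show ?thesis .
      qed
      then show ?thesis unfolding B_def by (intro arg_cong[where f="\<lambda>x. \<alpha> / real m * x"] sum.cong) auto
    qed
    have Dnj: "n + j \<in> Dset n j" for j unfolding Dset_def by auto
    have intB: "integrable M B" unfolding Beq using intPhi[OF Dnj] by auto
    have intBv: "(\<integral>\<omega>. B \<omega> \<partial>M) \<le> \<alpha>"
    proof -
      have "(\<integral>\<omega>. B \<omega> \<partial>M) = \<alpha> / real m * (\<Sum>j\<in>{1..m}. real (n + 1) * (\<integral>\<omega>. Phi j (n + j) (Z \<omega>) \<partial>M))"
        unfolding Beq using intPhi[OF Dnj] by (simp add: integral_sum)
      also have "\<dots> \<le> \<alpha> / real m * (\<Sum>j\<in>{1..m}. 1)"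
        using key alpha by (intro mult_left_mono sum_mono) auto
      also have "\<dots> \<le> \<alpha>" using alpha by (cases "m = 0") auto
      finally show ?thesis .
    qed
    show ?thesis
    proof (cases "integrable M FDP")
      case True
      have "(\<integral>\<omega>. FDP \<omega> \<partial>M) \<le> (\<integral>\<omega>. B \<omega> \<partial>M)" using True intB le by (intro integral_mono) auto
      then show ?thesis using intBv unfolding FDP_def by simp
    next
      case False
      then show ?thesis using alpha unfolding FDP_def by (simp add: not_integrable_integral_eq)
    qed
  qed
  show "\<gamma> = \<alpha> \<longrightarrow> (\<forall>\<omega>\<in>space M. Sp \<omega> = SCS \<omega>)"
  proof (intro impI ballI)
    fix \<omega> assume ga: "\<gamma> = \<alpha>"
    have cp: "(\<lambda>j. conf_pval n s c (X \<omega>) (Y \<omega>) j) = (\<lambda>j. (1 + Nc n (\<lambda>i. s (X \<omega> i)) (L \<omega>) (s (X \<omega> (n + j)))) / real (n + 1))"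
      unfolding conf_pval_eq L_def ..
    define sc where "sc = (\<lambda>i. s (X \<omega> i))"
    have e1: "eBH \<alpha> m (\<lambda>j. Eval n m sc (L \<omega>) \<alpha> j 1) =
      (if Sset n m sc (L \<omega>) \<alpha> = {} then {} else {j \<in> {1..m}. sc (n + j) \<le> Max (Sset n m sc (L \<omega>) \<alpha>)})"
      by (rule eBH_form[OF Lnn alpha(1)])
    have e2: "BH \<alpha> m (\<lambda>j. (1 + Nc n sc (L \<omega>) (sc (n + j))) / real (n + 1)) =
      (if Sset n m sc (L \<omega>) \<alpha> = {} then {} else {j \<in> {1..m}. sc (n + j) \<le> Max (Sset n m sc (L \<omega>) \<alpha>)})"
      by (rule BH_form[OF Lnn alpha(1)])
    show "Sp \<omega> = SCS \<omega>" unfolding Sp_def SCS_def cp ga sc_def[symmetric]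
      using e1 e2 unfolding sc_def by simp
  qed
qed


end
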